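(* Let $\lambda\in[0,1]$. For every $\alpha$ with $1\le\alpha<\max\left\{\frac{\sqrt{\lambda^2-2\lambda+5}-\lambda+1}{2},\frac{2(1-\lambda)}{2\lambda+1}\right\}$, there exists an instance with the weighted single metric loss with parameter $\lambda$ in which no clustering is in the $\alpha$-core.
   Context: Instance: finite nonempty set $\mathcal{N}$ of $n$ agents, finite nonempty set $\mathcal{M}$ of feasible centers, positive integer $k$, pseudometric $d$ on $\mathcal{N}\cup\mathcal{M}$. Weighted single metric loss: $\ell_i(C,x)=\lambda\max_{j\in C}d(i,j)+(1-\lambda)d(i,x)$ for $i\in C\subseteq\mathcal{N}$, $x\in\mathcal{M}$. A clustering is $\mathcal{X}=\{(C_1,x_1),\dots,(C_k,x_k)\}$ with $C_t$ pairwise disjoint (some possibly empty), union $\mathcal{N}$, $x_t\in\mathcal{M}$; $\ell_i(\mathcal{X})=\ell_i(C_t,x_t)$ where $i\in C_t$. For $\alpha\ge1$, $\mathcal{X}$ is in the $\alpha$-core if there is no $S\subseteq\mathcal{N}$ with $|S|\ge n/k$ and $y\in\mathcal{M}$ with $\alpha\,\ell_i(S,y)<\ell_i(\mathcal{X})$ for all $i\in S$. *)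

theory Defs
  imports "HOL-Analysis.Analysis"
begin

definition pseudometric_on :: "'p set \<Rightarrow> ('p \<Rightarrow> 'p \<Rightarrow> real) \<Rightarrow> bool" where
  "pseudometric_on P d \<longleftrightarrow>
     (\<forall>a\<in>P. d a a = 0) \<and>
     (\<forall>a\<in>P. \<forall>b\<in>P. d a b \<ge> 0 \<and> d a b = d b a) \<and>
     (\<forall>a\<in>P. \<forall>b\<in>P. \<forall>c\<in>P. d a c \<le> d a b + d b c)"

text \<open>An instance: agents N, feasible centers M, number k of clusters, pseudometric d on N \<union> M.\<close>
definition clust_instance :: "'p set \<Rightarrow> 'p set \<Rightarrow> nat \<Rightarrow> ('p \<Rightarrow> 'p \<Rightarrow> real) \<Rightarrow> bool" where
  "clust_instance N M k d \<longleftrightarrow> finite N \<and> N \<noteq> {} \<and> finite M \<and> M \<noteq> {} \<and> N \<inter> M = {} \<and> k > 0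
     \<and> pseudometric_on (N \<union> M) d"

definition wloss :: "real \<Rightarrow> ('p \<Rightarrow> 'p \<Rightarrow> real) \<Rightarrow> 'p \<Rightarrow> 'p set \<Rightarrow> 'p \<Rightarrow> real" where
  "wloss lam d i C x = lam * Max ((\<lambda>j. d i j) ` C) + (1 - lam) * d i x"

definition clustering :: "'p set \<Rightarrow> 'p set \<Rightarrow> nat \<Rightarrow> (nat \<Rightarrow> 'p set) \<Rightarrow> (nat \<Rightarrow> 'p) \<Rightarrow> bool" where
  "clustering N M k C c \<longleftrightarrow>
     (\<forall>t<k. \<forall>s<k. t \<noteq> s \<longrightarrow> C t \<inter> C s = {}) \<and>
     (\<Union>t<k. C t) = N \<and> (\<forall>t<k. c t \<in> M)"

definition clust_loss :: "real \<Rightarrow> ('p \<Rightarrow> 'p \<Rightarrow> real) \<Rightarrow> nat \<Rightarrow> (nat \<Rightarrow> 'p set) \<Rightarrow> (nat \<Rightarrow> 'p) \<Rightarrow> 'p \<Rightarrow> real" where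
  "clust_loss lam d k C c i = (let t = (THE t. t < k \<and> i \<in> C t) in wloss lam d i (C t) (c t))"

definition in_alpha_core :: "real \<Rightarrow> real \<Rightarrow> 'p set \<Rightarrow> 'p set \<Rightarrow> nat \<Rightarrow> ('p \<Rightarrow> 'p \<Rightarrow> real)
    \<Rightarrow> (nat \<Rightarrow> 'p set) \<Rightarrow> (nat \<Rightarrow> 'p) \<Rightarrow> bool" where
  "in_alpha_core lam \<alpha> N M k d C c \<longleftrightarrow>
     \<not> (\<exists>S y. S \<subseteq> N \<and> real (card S) \<ge> real (card N) / real k \<and> y \<in> M \<and>
            (\<forall>i\<in>S. \<alpha> * wloss lam d i S y < clust_loss lam d k C c i))"

end

theory Submission
  imports Defs
begin

definition side :: "nat \<Rightarrow> nat" where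
  "side p = (if p < 6 then p div 3 else (p - 6) div 3)"
definition loc :: "nat \<Rightarrow> nat" where
  "loc p = (if p < 6 then p mod 3 else 3 + (p - 6) mod 3)"
definition gd :: "(nat \<Rightarrow> nat \<Rightarrow> real) \<Rightarrow> real \<Rightarrow> nat \<Rightarrow> nat \<Rightarrow> real" where
  "gd \<delta> B p q = (if side p = side q then \<delta> (loc p) (loc q) else B)"
definition lloss :: "real \<Rightarrow> (nat \<Rightarrow> nat \<Rightarrow> real) \<Rightarrow> nat \<Rightarrow> nat set \<Rightarrow> nat \<Rightarrow> real" where
  "lloss lam \<delta> i S y = lam * Max (\<delta> i ` S) + (1 - lam) * \<delta> i y"

lemma pt_cases: "(p::nat) < 12 \<Longrightarrow> loc p < 6 \<and> side p < 2"
  unfolding loc_def side_def by auto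

lemma gd_pm:
  assumes refl: "\<forall>p<6. \<delta> p p = 0"
    and nn: "\<forall>p<6. \<forall>q<6. 0 \<le> \<delta> p q \<and> \<delta> p q = \<delta> q p \<and> \<delta> p q \<le> K"
    and tri: "\<forall>p<6. \<forall>q<6. \<forall>u<6. \<delta> p u \<le> \<delta> p q + \<delta> q u"
    and big: "K \<le> B"
  shows "pseudometric_on (({0..<6} \<union> {6..<12} :: nat set)) (gd \<delta> B)"
proof -
  have K0: "0 \<le> K" using nn by force
  have P: "a \<in> ({0..<6} \<union> {6..<12} :: nat set) \<Longrightarrow> loc a < 6 \<and> side a < 2" for a
    using pt_cases by auto
  have A1: "\<forall>a\<in>({0..<6} \<union> {6..<12} :: nat set). gd \<delta> B a a = 0"
    using P refl unfolding gd_def by auto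
  have A2: "\<forall>a\<in>({0..<6} \<union> {6..<12} :: nat set). \<forall>b\<in>({0..<6} \<union> {6..<12} :: nat set). 0 \<le> gd \<delta> B a b \<and> gd \<delta> B a b = gd \<delta> B b a"
  proof (intro ballI)
    fix a b assume a: "a \<in> ({0..<6} \<union> {6..<12} :: nat set)" and b: "b \<in> ({0..<6} \<union> {6..<12} :: nat set)"
    show "0 \<le> gd \<delta> B a b \<and> gd \<delta> B a b = gd \<delta> B b a"
      using P[OF a] P[OF b] nn K0 big unfolding gd_def by auto
  qed
  have A3: "\<forall>a\<in>({0..<6} \<union> {6..<12} :: nat set). \<forall>b\<in>({0..<6} \<union> {6..<12} :: nat set). \<forall>u\<in>({0..<6} \<union> {6..<12} :: nat set). gd \<delta> B a u \<le> gd \<delta> B a b + gd \<delta> B b u"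
  proof (intro ballI)
    fix a b u assume a: "a \<in> ({0..<6} \<union> {6..<12} :: nat set)" and b: "b \<in> ({0..<6} \<union> {6..<12} :: nat set)"
      and u: "u \<in> ({0..<6} \<union> {6..<12} :: nat set)"
    have la: "loc a < 6" "side a < 2" and lb: "loc b < 6" "side b < 2" and lu: "loc u < 6" "side u < 2"
      using P[OF a] P[OF b] P[OF u] by auto
    show "gd \<delta> B a u \<le> gd \<delta> B a b + gd \<delta> B b u"
    proof (cases "side a = side u")
      case True
      then show ?thesis
      proof (cases "side a = side b")
        case True
        then show ?thesis using \<open>side a = side u\<close> tri la lb lu unfolding gd_def by auto
      next
        case False
        then show ?thesis using \<open>side a = side u\<close> nn la lu big unfolding gd_def by force
      qed
    next
      case False
      then have "side b = side a \<or> side b = side u" using la lb lu by linarith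
      then show ?thesis using False nn la lb lu K0 big unfolding gd_def by force
    qed
  qed
  show ?thesis unfolding pseudometric_on_def using A1 A2 A3 by blast
qed


definition local_ok :: "real \<Rightarrow> real \<Rightarrow> (nat \<Rightarrow> nat \<Rightarrow> real) \<Rightarrow> bool" where
  "local_ok lam \<alpha> \<delta> \<longleftrightarrow> (\<forall>x\<in>{3,4,5}. \<forall>T \<subseteq> {0,1,2}. \<exists>S \<subseteq> {0,1,2}. 2 \<le> card S \<and>
     (\<exists>y\<in>{3,4,5}. \<forall>i\<in>S. i \<in> T \<longrightarrow>
        \<alpha> * lloss lam \<delta> i S y < lam * Max (\<delta> i ` T) + (1 - lam) * \<delta> i x))"

lemma three_cases: "(\<forall>t<(3::nat). P t) \<longleftrightarrow> P 0 \<and> P 1 \<and> P 2"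
  by (auto simp: less_Suc_eq eval_nat_numeral)

lemma pick_side:
  assumes "\<forall>t<(3::nat). sd t < (2::nat)"
  shows "\<exists>s<2. \<forall>t1<3. \<forall>t2<3. sd t1 = s \<longrightarrow> sd t2 = s \<longrightarrow> t1 = t2"
proof -
  have h: "sd 0 < 2" "sd 1 < 2" "sd 2 < 2" using assms by (auto simp: three_cases)
  show ?thesis
  proof (cases "sd 0 = sd 1")
    case c1: True
    show ?thesis
    proof (cases "sd 1 = sd 2")
      case True
      show ?thesis by (rule exI[of _ "1 - sd 0"]) (use h c1 True in \<open>simp add: three_cases; presburger\<close>)
    next
      case False
      show ?thesis by (rule exI[of _ "sd 2"]) (use h c1 False in \<open>simp add: three_cases\<close>)
    qed
  next
    case c1: False
    show ?thesis
    proof (cases "sd 0 = sd 2")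
      case True
      show ?thesis by (rule exI[of _ "sd 1"]) (use h c1 True in \<open>simp add: three_cases\<close>)
    next
      case False
      show ?thesis by (rule exI[of _ "sd 0"]) (use h c1 False in \<open>simp add: three_cases\<close>)
    qed
  qed
qed


lemma generic_core:
  fixes lam \<alpha> B K :: real and \<delta> :: "nat \<Rightarrow> nat \<Rightarrow> real"
  assumes lam: "0 \<le> lam" "lam < 1" and al: "1 \<le> \<alpha>"
    and refl: "\<forall>p<6. \<delta> p p = 0"
    and nn: "\<forall>p<6. \<forall>q<6. 0 \<le> \<delta> p q \<and> \<delta> p q = \<delta> q p \<and> \<delta> p q \<le> K"
    and big: "\<alpha> * K < (1 - lam) * B"
    and lok: "local_ok lam \<alpha> \<delta>"
    and cl: "clustering {0..<6} {6..<12} 3 C c"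
  shows "\<not> in_alpha_core lam \<alpha> {0..<6} {6..<12} 3 (gd \<delta> B) C c"
proof -
  define N :: "nat set" where "N = {0..<6}"
  define d where "d = gd \<delta> B"
  have disj: "\<forall>t<3. \<forall>s<3. t \<noteq> s \<longrightarrow> C t \<inter> C s = {}" and cover: "(\<Union>t<3. C t) = N"
    and cen: "\<forall>t<3. c t \<in> {6..<12}"
    using cl unfolding clustering_def N_def by auto
  define tix where "tix p = (THE t. t < 3 \<and> p \<in> C t)" for p
  have ex1: "\<exists>!t. t < 3 \<and> p \<in> C t" if "p \<in> N" for p
  proof -
    obtain t where t: "t < 3" "p \<in> C t" using cover \<open>p \<in> N\<close> by auto
    show ?thesis
    proof (rule ex1I[of _ t])
      show "t < 3 \<and> p \<in> C t" using t by auto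
    next
      fix u assume "u < 3 \<and> p \<in> C u"
      then show "u = t" using disj t by blast
    qed
  qed
  have tix: "tix p < 3 \<and> p \<in> C (tix p)" if "p \<in> N" for p
    using theI'[OF ex1[OF that]] unfolding tix_def by simp
  have tixu: "t = tix p" if "p \<in> N" "t < 3" "p \<in> C t" for p t
    using ex1[OF that(1)] tix[OF that(1)] that by blast
  have cl_eq: "clust_loss lam d 3 C c p = wloss lam d p (C (tix p)) (c (tix p))" for p
    by (simp add: clust_loss_def tix_def Let_def)
  have Cfin: "t < 3 \<Longrightarrow> C t \<subseteq> N" for t using cover by auto
  have finN: "finite N" unfolding N_def by simp
  define sd where "sd t = side (c t)" for t
  have sd2: "\<forall>t<(3::nat). sd t < 2" using cen pt_cases unfolding sd_def by auto
  obtain s where s2: "s < 2" and uniq: "\<forall>t1<3. \<forall>t2<3. sd t1 = s \<longrightarrow> sd t2 = s \<longrightarrow> t1 = t2"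
    using pick_side[OF sd2] by blast
  define ag where "ag i = 3 * s + i" for i
  have agN: "i < 3 \<Longrightarrow> ag i \<in> N" for i using s2 unfolding ag_def N_def by auto
  have agside: "i < 3 \<Longrightarrow> side (ag i) = s \<and> loc (ag i) = i" for i
    using s2 unfolding ag_def side_def loc_def by auto
  define cn where "cn y = 6 + 3 * s + (y - 3)" for y
  have cnM: "y \<in> {3,4,5} \<Longrightarrow> cn y \<in> {6..<12} \<and> side (cn y) = s \<and> loc (cn y) = y" for y
    using s2 unfolding cn_def side_def loc_def by auto
  have dagag: "i < 3 \<Longrightarrow> j < 3 \<Longrightarrow> d (ag i) (ag j) = \<delta> i j" for i j
    using agside unfolding d_def gd_def by auto
  have dagcn: "i < 3 \<Longrightarrow> y \<in> {3,4,5} \<Longrightarrow> d (ag i) (cn y) = \<delta> i y" for i y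
    using agside cnM unfolding d_def gd_def by auto
  define T where "T = {i. i < 3 \<and> sd (tix (ag i)) = s}"
  have T3: "T \<subseteq> {0,1,2}" unfolding T_def by auto
  have "\<exists>x\<in>{3,4,5}. \<exists>t0<3. \<forall>i\<in>T. tix (ag i) = t0 \<and> sd t0 = s \<and> loc (c t0) = x"
  proof (cases "T = {}")
    case True then show ?thesis by (auto intro: exI[of _ 0])
  next
    case False
    then obtain i0 where i0: "i0 \<in> T" by auto
    define t0 where "t0 = tix (ag i0)"
    have "i0 < 3" using i0 unfolding T_def by auto
    then have t03: "t0 < 3" using tix[OF agN] unfolding t0_def by auto
    have "c t0 \<in> {6..<12}" using cen t03 by auto
    then have lx: "loc (c t0) \<in> {3,4,5}" unfolding loc_def by auto
    have H: "\<forall>i\<in>T. tix (ag i) = t0 \<and> sd t0 = s"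
    proof
      fix i assume "i \<in> T"
      then have "i < 3" "sd (tix (ag i)) = s" unfolding T_def by auto
      moreover have "sd t0 = s" using i0 unfolding T_def t0_def by auto
      moreover have "tix (ag i) < 3" using tix[OF agN[OF \<open>i < 3\<close>]] by simp
      ultimately show "tix (ag i) = t0 \<and> sd t0 = s" using uniq t03 by blast
    qed
    have "\<forall>i\<in>T. tix (ag i) = t0 \<and> sd t0 = s \<and> loc (c t0) = loc (c t0)" using H by simp
    then have "\<exists>t0'<3. \<forall>i\<in>T. tix (ag i) = t0' \<and> sd t0' = s \<and> loc (c t0') = loc (c t0)"
      using t03 by (intro exI[of _ t0]) simp
    then show ?thesis using lx by (intro bexI[of _ "loc (c t0)"])
  qed
  then obtain x where x: "x \<in> {3,4,5}" and "\<exists>t0<3. \<forall>i\<in>T. tix (ag i) = t0 \<and> sd t0 = s \<and> loc (c t0) = x"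
    by (elim bexE)
  then obtain t0 where t03: "t0 < 3"
    and xt: "\<forall>i\<in>T. tix (ag i) = t0 \<and> sd t0 = s \<and> loc (c t0) = x" by (elim exE conjE)
  have curT: "lam * Max (\<delta> i ` T) + (1 - lam) * \<delta> i x \<le> clust_loss lam d 3 C c (ag i)"
    if iT: "i \<in> T" for i
  proof -
    have i3: "i < 3" using iT T_def by auto
    have ti: "tix (ag i) = t0" and st: "sd t0 = s" and lt: "loc (c t0) = x" using xt iT by auto
    have dx: "d (ag i) (c t0) = \<delta> i x"
      using agside[OF i3] st lt unfolding d_def gd_def sd_def by auto
    have finC: "finite (C t0)" using Cfin[OF t03] finN finite_subset by blast
    have "Max (\<delta> i ` T) \<le> Max (d (ag i) ` C t0)"
    proof (rule Max.boundedI)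
      show "finite (\<delta> i ` T)" using T3 finite_subset by (auto intro: finite_subset[OF T3])
      show "\<delta> i ` T \<noteq> {}" using iT by auto
    next
      fix a assume "a \<in> \<delta> i ` T"
      then obtain j where j: "j \<in> T" "a = \<delta> i j" by auto
      have j3: "j < 3" using j T_def by auto
      have "ag j \<in> C t0" using tix[OF agN[OF j3]] xt j by auto
      then have "d (ag i) (ag j) \<le> Max (d (ag i) ` C t0)" using finC by auto
      then show "a \<le> Max (d (ag i) ` C t0)" using dagag[OF i3 j3] j by simp
    qed
    then have "lam * Max (\<delta> i ` T) \<le> lam * Max (d (ag i) ` C t0)"
      using lam by (simp add: mult_left_mono)
    then show ?thesis unfolding cl_eq wloss_def ti dx by simp
  qed
  have curN: "(1 - lam) * B \<le> clust_loss lam d 3 C c (ag i)" if i3: "i < 3" and iT: "i \<notin> T" for i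
  proof -
    define t where "t = tix (ag i)"
    have t3: "t < 3" and inC: "ag i \<in> C t" using tix[OF agN[OF i3]] t_def by auto
    have "sd t \<noteq> s" using iT i3 unfolding T_def t_def by auto
    then have dB: "d (ag i) (c t) = B" using agside[OF i3] unfolding d_def gd_def sd_def by auto
    have finC: "finite (C t)" using Cfin[OF t3] finN finite_subset by blast
    have "d (ag i) (ag i) \<le> Max (d (ag i) ` C t)" using finC inC by auto
    moreover have "d (ag i) (ag i) = 0" using dagag[OF i3 i3] refl i3 by auto
    ultimately have "0 \<le> lam * Max (d (ag i) ` C t)" using lam by simp
    then show ?thesis unfolding cl_eq wloss_def t_def[symmetric] dB by simp
  qed
  note L = lok[unfolded local_ok_def, rule_format, OF x T3]
  from L obtain S y where S3: "S \<subseteq> {0,1,2}" and cS: "2 \<le> card S" and y: "y \<in> {3,4,5}"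
    and dev: "\<forall>i\<in>S. i \<in> T \<longrightarrow> \<alpha> * lloss lam \<delta> i S y < lam * Max (\<delta> i ` T) + (1 - lam) * \<delta> i x"
    by (elim exE conjE bexE) (intro that; assumption)
  have finS: "finite S" using S3 finite_subset by auto
  have injag: "inj_on ag S" unfolding ag_def inj_on_def by auto
  have cS': "card (ag ` S) = card S" using card_image[OF injag] .
  have S'N: "ag ` S \<subseteq> N" using S3 agN by auto
  have lK: "lloss lam \<delta> i S y \<le> K" if "i \<in> S" for i
  proof -
    have i6: "i < 6" using that S3 by auto
    have "Max (\<delta> i ` S) \<le> K"
      using finS that S3 nn i6 by (subst Max_le_iff) auto
    moreover have "\<delta> i y \<le> K" using nn i6 y by auto
    ultimately have "lam * Max (\<delta> i ` S) + (1 - lam) * \<delta> i y \<le> lam * K + (1 - lam) * K"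
      using lam by (intro add_mono mult_left_mono) auto
    then show ?thesis unfolding lloss_def by (simp add: algebra_simps)
  qed
  have wl: "wloss lam d (ag i) (ag ` S) (cn y) = lloss lam \<delta> i S y" if "i \<in> S" for i
  proof -
    have i3: "i < 3" using that S3 by auto
    have "d (ag i) ` ag ` S = \<delta> i ` S"
      unfolding image_image using dagag[OF i3] S3 by (intro image_cong) auto
    then show ?thesis unfolding wloss_def lloss_def using dagcn[OF i3 y] by simp
  qed
  have "\<forall>p\<in>ag ` S. \<alpha> * wloss lam d p (ag ` S) (cn y) < clust_loss lam d 3 C c p"
  proof
    fix p assume "p \<in> ag ` S"
    then obtain i where iS: "i \<in> S" and p: "p = ag i" by auto
    have i3: "i < 3" using iS S3 by auto
    show "\<alpha> * wloss lam d p (ag ` S) (cn y) < clust_loss lam d 3 C c p"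
    proof (cases "i \<in> T")
      case True
      have "\<alpha> * lloss lam \<delta> i S y < lam * Max (\<delta> i ` T) + (1 - lam) * \<delta> i x"
        using dev iS True by blast
      then show ?thesis using curT[OF True] wl[OF iS] p by simp
    next
      case False
      have "\<alpha> * lloss lam \<delta> i S y \<le> \<alpha> * K" using lK[OF iS] al by (simp add: mult_left_mono)
      then show ?thesis using big curN[OF i3 False] wl[OF iS] p by simp
    qed
  qed
  moreover have "real (card N) / real 3 \<le> real (card (ag ` S))"
    using cS cS' unfolding N_def by simp
  moreover have "cn y \<in> {6..<12}" using cnM y by auto
  ultimately have "ag ` S \<subseteq> {0..<6} \<and> real (card {0..<6::nat}) / real 3 \<le> real (card (ag ` S)) \<and> cn y \<in> {6..<12} \<and>
      (\<forall>p\<in>ag ` S. \<alpha> * wloss lam (gd \<delta> B) p (ag ` S) (cn y) < clust_loss lam (gd \<delta> B) 3 C c p)"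
    using S'N unfolding N_def d_def by blast
  then show ?thesis unfolding in_alpha_core_def by blast
qed


lemma six_cases: "(\<forall>p<(6::nat). P p) \<longleftrightarrow> P 0 \<and> P 1 \<and> P 2 \<and> P 3 \<and> P 4 \<and> P 5"
proof -
  have e: "(p::nat) < 6 \<longleftrightarrow> p = 0 \<or> p = 1 \<or> p = 2 \<or> p = 3 \<or> p = 4 \<or> p = 5" for p by arith
  show ?thesis unfolding e by blast
qed

definition tab2 :: "nat \<Rightarrow> nat \<Rightarrow> real" where
  "tab2 i j = [[1,4,2],[2,1,4],[4,2,1::real]] ! i ! j"

definition del2 :: "nat \<Rightarrow> nat \<Rightarrow> real" where
  "del2 p q = (if p = q then 0 else if p < 3 \<and> q < 3 then 3 else if 3 \<le> p \<and> 3 \<le> q then 3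
      else if p < 3 then tab2 p (q - 3) else tab2 q (p - 3))"

lemma del2_metric:
  "\<forall>p<6. del2 p p = 0"
  "\<forall>p<6. \<forall>q<6. 0 \<le> del2 p q \<and> del2 p q = del2 q p \<and> del2 p q \<le> 4"
  "\<forall>p<6. \<forall>q<6. \<forall>u<6. del2 p u \<le> del2 p q + del2 q u"
    apply (simp_all only: six_cases)
    apply (intro conjI)
    by (simp_all add: del2_def tab2_def)

lemma Max_geT:
  assumes "j \<in> T" "T \<subseteq> {0,1,2::nat}"
  shows "(\<delta> i j :: real) \<le> Max (\<delta> i ` T)"
proof -
  have "finite T" using assms(2) finite_subset by auto
  then show ?thesis using assms(1) by auto
qed


lemma del2_local:
  assumes lam: "0 \<le> lam" "lam < 1" and a0: "0 \<le> \<alpha>" and h: "\<alpha> * (1 + 2 * lam) < 2 * (1 - lam)"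
  shows "local_ok lam \<alpha> del2"
  unfolding local_ok_def
proof (intro ballI allI impI)
  fix x T assume x: "x \<in> {3,4,5::nat}" and T: "T \<subseteq> {0,1,2::nat}"
  have key: "\<alpha> * lloss lam del2 i S y < lam * Max (del2 i ` T) + (1 - lam) * del2 i x"
    if "i \<in> T" "\<alpha> * lloss lam del2 i S y < (1 - lam) * del2 i x" for i S y
  proof -
    have "del2 i i \<le> Max (del2 i ` T)" by (rule Max_geT[OF that(1) T])
    then have "0 \<le> Max (del2 i ` T)" by (simp add: del2_def)
    then have "0 \<le> lam * Max (del2 i ` T)" using lam by simp
    then show ?thesis using that(2) by linarith
  qed
  have "0 \<le> \<alpha> * lam" using a0 lam by simp
  then have h2: "\<alpha> * (2 + lam) < 4 * (1 - lam)" using h by (simp add: algebra_simps)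
  have l1: "\<alpha> * (lam * 3 + (1 - lam) * 1) < (1 - lam) * 2" using h by (simp add: algebra_simps)
  have l2: "\<alpha> * (lam * 3 + (1 - lam) * 2) < (1 - lam) * 4" using h2 by (simp add: algebra_simps)
  from x consider "x = 3" | "x = 4" | "x = 5" by auto
  then show "\<exists>S\<subseteq>{0,1,2}. 2 \<le> card S \<and> (\<exists>y\<in>{3,4,5}. \<forall>i\<in>S. i \<in> T \<longrightarrow>
        \<alpha> * lloss lam del2 i S y < lam * Max (del2 i ` T) + (1 - lam) * del2 i x)"
  proof cases
    case 1
    have "\<forall>i\<in>{1,2}. i \<in> T \<longrightarrow> \<alpha> * lloss lam del2 i {1,2} 4 < lam * Max (del2 i ` T) + (1 - lam) * del2 i x"
    proof (intro ballI impI)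
      fix i :: nat assume "i \<in> {1,2}" "i \<in> T"
      then consider "i = 1" | "i = 2" by auto
      then show "\<alpha> * lloss lam del2 i {1,2} 4 < lam * Max (del2 i ` T) + (1 - lam) * del2 i x"
      proof cases
        case 1 then show ?thesis using \<open>i \<in> T\<close> \<open>x = 3\<close> l1
          by (intro key) (simp_all add: lloss_def del2_def tab2_def)
      next
        case 2 then show ?thesis using \<open>i \<in> T\<close> \<open>x = 3\<close> l2
          by (intro key) (simp_all add: lloss_def del2_def tab2_def)
      qed
    qed
    then show ?thesis by (intro exI[of _ "{1,2}"]) auto
  next
    case 2
    have "\<forall>i\<in>{0,2}. i \<in> T \<longrightarrow> \<alpha> * lloss lam del2 i {0,2} 5 < lam * Max (del2 i ` T) + (1 - lam) * del2 i x"
    proof (intro ballI impI)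
      fix i :: nat assume "i \<in> {0,2}" "i \<in> T"
      then consider "i = 0" | "i = 2" by auto
      then show "\<alpha> * lloss lam del2 i {0,2} 5 < lam * Max (del2 i ` T) + (1 - lam) * del2 i x"
      proof cases
        case 1 then show ?thesis using \<open>i \<in> T\<close> \<open>x = 4\<close> l2
          by (intro key) (simp_all add: lloss_def del2_def tab2_def)
      next
        case 2 then show ?thesis using \<open>i \<in> T\<close> \<open>x = 4\<close> l1
          by (intro key) (simp_all add: lloss_def del2_def tab2_def)
      qed
    qed
    then show ?thesis by (intro exI[of _ "{0,2}"]) auto
  next
    case 3
    have "\<forall>i\<in>{0,1}. i \<in> T \<longrightarrow> \<alpha> * lloss lam del2 i {0,1} 3 < lam * Max (del2 i ` T) + (1 - lam) * del2 i x"
    proof (intro ballI impI)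
      fix i :: nat assume "i \<in> {0,1}" "i \<in> T"
      then consider "i = 0" | "i = 1" by auto
      then show "\<alpha> * lloss lam del2 i {0,1} 3 < lam * Max (del2 i ` T) + (1 - lam) * del2 i x"
      proof cases
        case 1 then show ?thesis using \<open>i \<in> T\<close> \<open>x = 5\<close> l1
          by (intro key) (simp_all add: lloss_def del2_def tab2_def)
      next
        case 2 then show ?thesis using \<open>i \<in> T\<close> \<open>x = 5\<close> l2
          by (intro key) (simp_all add: lloss_def del2_def tab2_def)
      qed
    qed
    then show ?thesis by (intro exI[of _ "{0,1}"]) auto
  qed
qed


definition pos1 :: "nat \<Rightarrow> nat" where
  "pos1 p = [0,1,2,0,2,0] ! p"

definition bet :: "real \<Rightarrow> nat \<Rightarrow> nat \<Rightarrow> real" where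
  "bet r u v = (if u = v then 0 else if (u = 0 \<and> v = 2) \<or> (u = 2 \<and> v = 0) then 1 else r)"

definition del1 :: "real \<Rightarrow> nat \<Rightarrow> nat \<Rightarrow> real" where
  "del1 r p q = bet r (pos1 p) (pos1 q)"

lemma del1_metric:
  assumes r: "1 \<le> r"
  shows
  "\<forall>p<6. del1 r p p = 0"
  "\<forall>p<6. \<forall>q<6. 0 \<le> del1 r p q \<and> del1 r p q = del1 r q p \<and> del1 r p q \<le> r"
  "\<forall>p<6. \<forall>q<6. \<forall>u<6. del1 r p u \<le> del1 r p q + del1 r q u"
proof -
  show "\<forall>p<6. del1 r p p = 0" by (simp add: six_cases del1_def bet_def)
  show "\<forall>p<6. \<forall>q<6. 0 \<le> del1 r p q \<and> del1 r p q = del1 r q p \<and> del1 r p q \<le> r"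
    apply (simp only: six_cases)
    apply (intro conjI)
    using r by (simp_all add: del1_def bet_def pos1_def)
  show "\<forall>p<6. \<forall>q<6. \<forall>u<6. del1 r p u \<le> del1 r p q + del1 r q u"
    apply (simp only: six_cases)
    apply (intro conjI)
    using r by (simp_all add: del1_def bet_def pos1_def)
qed

lemma del1_local:
  assumes lam: "0 \<le> lam" "lam < 1" and r: "1 \<le> r"
    and c1: "\<alpha> < lam * r + 1 - lam" and c2: "\<alpha> * lam < lam * r" and c3: "\<alpha> * lam * r < 1"
  shows "local_ok lam \<alpha> (del1 r)"
  unfolding local_ok_def
proof (intro ballI allI impI)
  fix x T assume x: "x \<in> {3,4,5::nat}" and T: "T \<subseteq> {0,1,2::nat}"
  let ?d = "del1 r"
  have key: "\<alpha> * lloss lam ?d i S y < lam * Max (?d i ` T) + (1 - lam) * ?d i x"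
    if "i \<in> T" "j \<in> T" "\<alpha> * lloss lam ?d i S y < lam * ?d i j + (1 - lam) * ?d i x" for i j S y
  proof -
    have "?d i j \<le> Max (?d i ` T)" by (rule Max_geT[OF that(2) T])
    then have "lam * ?d i j \<le> lam * Max (?d i ` T)" using lam by (simp add: mult_left_mono)
    then show ?thesis using that(3) by linarith
  qed
  have c1': "\<alpha> * (lam * 1 + (1 - lam) * 1) < lam * r + (1 - lam) * 1" using c1 by (simp add: algebra_simps)
  have c2': "\<alpha> * (lam * 1 + (1 - lam) * 0) < lam * r + (1 - lam) * 0" using c2 by (simp add: algebra_simps)
  have c3': "\<alpha> * (lam * r + (1 - lam) * 0) < lam * 1 + (1 - lam) * 1" using c3 by (simp add: algebra_simps)
  have Mx: "Max {0, r} = r" "Max {r, 0} = r" "Max {0, 1::real} = 1" "Max {1, 0::real} = 1" using r by auto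
  show "\<exists>S\<subseteq>{0,1,2}. 2 \<le> card S \<and> (\<exists>y\<in>{3,4,5}. \<forall>i\<in>S. i \<in> T \<longrightarrow>
        \<alpha> * lloss lam ?d i S y < lam * Max (?d i ` T) + (1 - lam) * ?d i x)"
  proof (cases "x = 4")
    case x4: True
    show ?thesis
    proof (cases "1 \<in> T")
      case True
      have "\<forall>i\<in>{0,2}. i \<in> T \<longrightarrow> \<alpha> * lloss lam ?d i {0,2} 4 < lam * Max (?d i ` T) + (1 - lam) * ?d i x"
      proof (intro ballI impI)
        fix i :: nat assume "i \<in> {0,2}" "i \<in> T"
        then consider "i = 0" | "i = 2" by auto
        then show "\<alpha> * lloss lam ?d i {0,2} 4 < lam * Max (?d i ` T) + (1 - lam) * ?d i x"
        proof cases
          case 1 then show ?thesis using \<open>i \<in> T\<close> True x4 c1'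
            by (intro key[of _ 1]) (simp_all add: lloss_def del1_def bet_def pos1_def Mx)
        next
          case 2 then show ?thesis using \<open>i \<in> T\<close> True x4 c2'
            by (intro key[of _ 1]) (simp_all add: lloss_def del1_def bet_def pos1_def Mx)
        qed
      qed
      then show ?thesis by (intro exI[of _ "{0,2}"]) auto
    next
      case n1: False
      show ?thesis
      proof (cases "2 \<in> T")
        case True
        have "\<forall>i\<in>{0,1}. i \<in> T \<longrightarrow> \<alpha> * lloss lam ?d i {0,1} 3 < lam * Max (?d i ` T) + (1 - lam) * ?d i x"
        proof (intro ballI impI)
          fix i :: nat assume "i \<in> {0,1}" "i \<in> T"
          then have "i = 0" using n1 by auto
          then show "\<alpha> * lloss lam ?d i {0,1} 3 < lam * Max (?d i ` T) + (1 - lam) * ?d i x"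
            using \<open>i \<in> T\<close> True x4 c3'
            by (intro key[of _ 2]) (simp_all add: lloss_def del1_def bet_def pos1_def Mx)
        qed
        then show ?thesis by (intro exI[of _ "{0,1}"]) auto
      next
        case False
        then show ?thesis using n1 by (intro exI[of _ "{1,2}"]) auto
      qed
    qed
  next
    case nx4: False
    then have x35: "x = 3 \<or> x = 5" using x by auto
    show ?thesis
    proof (cases "1 \<in> T")
      case True
      have "\<forall>i\<in>{0,2}. i \<in> T \<longrightarrow> \<alpha> * lloss lam ?d i {0,2} 3 < lam * Max (?d i ` T) + (1 - lam) * ?d i x"
      proof (intro ballI impI)
        fix i :: nat assume "i \<in> {0,2}" "i \<in> T"
        then consider "i = 0" | "i = 2" by auto
        then show "\<alpha> * lloss lam ?d i {0,2} 3 < lam * Max (?d i ` T) + (1 - lam) * ?d i x"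
        proof cases
          case 1 then show ?thesis using \<open>i \<in> T\<close> True x35 c2'
            by (intro key[of _ 1]) (auto simp add: lloss_def del1_def bet_def pos1_def Mx)
        next
          case 2 then show ?thesis using \<open>i \<in> T\<close> True x35 c1'
            by (intro key[of _ 1]) (auto simp add: lloss_def del1_def bet_def pos1_def Mx)
        qed
      qed
      then show ?thesis by (intro exI[of _ "{0,2}"]) auto
    next
      case n1: False
      show ?thesis
      proof (cases "0 \<in> T")
        case True
        have "\<forall>i\<in>{1,2}. i \<in> T \<longrightarrow> \<alpha> * lloss lam ?d i {1,2} 4 < lam * Max (?d i ` T) + (1 - lam) * ?d i x"
        proof (intro ballI impI)
          fix i :: nat assume "i \<in> {1,2}" "i \<in> T"
          then have "i = 2" using n1 by auto
          then show "\<alpha> * lloss lam ?d i {1,2} 4 < lam * Max (?d i ` T) + (1 - lam) * ?d i x"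
            using \<open>i \<in> T\<close> True x35 c3'
            by (intro key[of _ 0]) (auto simp add: lloss_def del1_def bet_def pos1_def Mx)
        qed
        then show ?thesis by (intro exI[of _ "{1,2}"]) auto
      next
        case False
        then show ?thesis using n1 by (intro exI[of _ "{0,1}"]) auto
      qed
    qed
  qed
qed


lemma assemble:
  fixes lam \<alpha> B K :: real and \<delta> :: "nat \<Rightarrow> nat \<Rightarrow> real"
  assumes lam: "0 \<le> lam" "lam < 1" and al: "1 \<le> \<alpha>"
    and refl: "\<forall>p<6. \<delta> p p = 0"
    and nn: "\<forall>p<6. \<forall>q<6. 0 \<le> \<delta> p q \<and> \<delta> p q = \<delta> q p \<and> \<delta> p q \<le> K"
    and tri: "\<forall>p<6. \<forall>q<6. \<forall>u<6. \<delta> p u \<le> \<delta> p q + \<delta> q u"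
    and KB: "K \<le> B" and big: "\<alpha> * K < (1 - lam) * B"
    and lok: "local_ok lam \<alpha> \<delta>"
  shows "\<exists>(N :: nat set) M k d. clust_instance N M k d \<and>
           (\<forall>C c. clustering N M k C c \<longrightarrow> \<not> in_alpha_core lam \<alpha> N M k d C c)"
proof (intro exI conjI allI impI)
  show "clust_instance {0..<6} {6..<12} 3 (gd \<delta> B)"
    unfolding clust_instance_def using gd_pm[OF refl nn tri KB] by auto
next
  fix C c assume "clustering {0..<6::nat} {6..<12} 3 C c"
  then show "\<not> in_alpha_core lam \<alpha> {0..<6} {6..<12} 3 (gd \<delta> B) C c"
    using generic_core[OF lam al refl nn big lok] by blast
qed

theorem mainTheorem11:
  fixes lam \<alpha> :: real
  assumes "0 \<le> lam" and "lam \<le> 1"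
    and "1 \<le> \<alpha>"
    and "\<alpha> < max ((sqrt (lam\<^sup>2 - 2 * lam + 5) - lam + 1) / 2) (2 * (1 - lam) / (2 * lam + 1))"
  shows "\<exists>(N :: nat set) M k d. clust_instance N M k d \<and>
           (\<forall>C c. clustering N M k C c \<longrightarrow> \<not> in_alpha_core lam \<alpha> N M k d C c)"
proof (cases "\<alpha> * (1 + 2 * lam) < 2 * (1 - lam)")
  case True
  have l1: "lam < 1"
  proof (rule ccontr)
    assume "\<not> lam < 1"
    then have "2 * (1 - lam) \<le> 0" by simp
    moreover have "0 < \<alpha> * (1 + 2 * lam)" using assms by simp
    ultimately show False using True by simp
  qed
  define B where "B = 4 * \<alpha> / (1 - lam) + 4"
  have eB: "(1 - lam) * B = 4 * \<alpha> + 4 * (1 - lam)" using l1 unfolding B_def by (simp add: field_simps)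
  have KB: "4 \<le> B" using assms l1 unfolding B_def by simp
  have big: "\<alpha> * 4 < (1 - lam) * B" using eB l1 by simp
  show ?thesis
    using assemble[OF assms(1) l1 assms(3) del2_metric KB big del2_local[OF assms(1) l1 _ True]] assms(3)
    by simp
next
  case False
  have pos: "0 < 2 * lam + 1" using assms by simp
  have nf2: "\<not> \<alpha> < 2 * (1 - lam) / (2 * lam + 1)"
    using False pos by (simp add: pos_less_divide_eq algebra_simps)
  then have f1: "\<alpha> < (sqrt (lam\<^sup>2 - 2 * lam + 5) - lam + 1) / 2" using assms(4)
    by (simp only: less_max_iff_disj) blast
  then have s1: "2 * \<alpha> + lam - 1 < sqrt (lam\<^sup>2 - 2 * lam + 5)" by simp
  have l1: "lam < 1"
  proof (rule ccontr)
    assume "\<not> lam < 1"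
    then have "lam = 1" using assms by simp
    then have "sqrt (lam\<^sup>2 - 2 * lam + 5) = 2" by (simp add: power2_eq_square real_sqrt_unique)
    then show False using f1 \<open>lam = 1\<close> assms(3) by simp
  qed
  have l0: "0 < lam"
  proof (rule ccontr)
    assume "\<not> 0 < lam"
    then have "lam = 0" using assms by simp
    have "sqrt 5 < sqrt 9" by (simp only: real_sqrt_less_iff)
    moreover have "sqrt 9 = 3" by (rule real_sqrt_unique) auto
    ultimately have "sqrt 5 < 3" by simp
    then show False using f1 nf2 \<open>lam = 0\<close> by simp
  qed
  have ge0: "0 \<le> 2 * \<alpha> + lam - 1" using assms by simp
  have "(2 * \<alpha> + lam - 1)\<^sup>2 < (sqrt (lam\<^sup>2 - 2 * lam + 5))\<^sup>2"
    using s1 ge0 by (intro power_strict_mono) auto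
  moreover have "0 \<le> lam\<^sup>2 - 2 * lam + 5"
  proof -
    have "lam\<^sup>2 - 2 * lam + 5 = (lam - 1)\<^sup>2 + 4" by (simp add: power2_eq_square algebra_simps)
    moreover have "0 \<le> (lam - 1)\<^sup>2" by simp
    ultimately show ?thesis by linarith
  qed
  ultimately have "(2 * \<alpha> + lam - 1)\<^sup>2 < lam\<^sup>2 - 2 * lam + 5" by simp
  then have q: "\<alpha> * \<alpha> + (lam - 1) * \<alpha> < 1" by (simp add: power2_eq_square algebra_simps)
  have apos: "0 < \<alpha>" using assms by simp
  have q2: "\<alpha> - 1 + lam < 1 / \<alpha>"
  proof -
    have "(\<alpha> - 1 + lam) * \<alpha> < 1" using q by (simp add: algebra_simps)
    then show ?thesis using apos by (simp add: pos_less_divide_eq)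
  qed
  define r where "r = ((\<alpha> - 1 + lam) + 1 / \<alpha>) / (2 * lam)"
  have lr: "lam * r = ((\<alpha> - 1 + lam) + 1 / \<alpha>) / 2" unfolding r_def using l0 by (simp add: field_simps)
  have lr1: "\<alpha> - 1 + lam < lam * r" using lr q2 by simp
  have lr2: "lam * r < 1 / \<alpha>" using lr q2 by simp
  have c1: "\<alpha> < lam * r + 1 - lam" using lr1 by simp
  have "0 \<le> (\<alpha> - 1) * (1 - lam)" using assms l1 by simp
  then have "\<alpha> * lam \<le> \<alpha> - 1 + lam" by (simp add: algebra_simps)
  then have c2: "\<alpha> * lam < lam * r" using lr1 by simp
  have c3: "\<alpha> * lam * r < 1"
  proof -
    have "\<alpha> * (lam * r) < \<alpha> * (1 / \<alpha>)" using lr2 apos by (intro mult_strict_left_mono) auto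
    then show ?thesis using apos by (simp add: mult.assoc)
  qed
  have "lam * 1 \<le> \<alpha> * lam" using assms l0 by simp
  then have "lam * 1 < lam * r" using c2 by simp
  then have r1: "1 \<le> r" using l0 by simp
  define B where "B = \<alpha> * r / (1 - lam) + r"
  have eB: "(1 - lam) * B = \<alpha> * r + (1 - lam) * r" using l1 unfolding B_def by (simp add: field_simps)
  have KB: "r \<le> B" using assms l1 r1 unfolding B_def by simp
  have big: "\<alpha> * r < (1 - lam) * B" using eB l1 r1 by simp
  show ?thesis
    using assemble[OF assms(1) l1 assms(3) del1_metric[OF r1] KB big
        del1_local[OF assms(1) l1 r1 c1 c2 c3]] .
qed

end
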